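(* Consider the following two-armed Gaussian bandit problem instance $\mathcal{G}=(\Delta,\sigma)$ with $\Delta>0$, $\sigma>0$: arms $a\in\{0,1\}$ have expected rewards $r(0)=-\Delta/2$ and $r(1)=\Delta/2$, and each pull of arm $a_t$ yields the observed reward $r_t=r(a_t)+z_t$ with $z_t\sim\mathcal{N}(0,\sigma^2)$ i.i.d. TRPO with KL radius $\eta>0$, phase length $\tau$ and $K$ phases (total horizon $T=K\tau$) starts from the uniform policy $\pi_1$ and, in each phase $k=1,\dots,K$, pulls arms according to the current policy $\pi_k$ (a distribution on $\{0,1\}$) for $\tau$ steps, forms the empirical mean rewards $\widehat r(0),\widehat r(1)$ of the two arms from that phase's data (set to $0$ for an arm not pulled), sets $\widehat\Delta_k=\widehat r(1)-\widehat r(0)$, and updates $$\pi_{k+1}=\arg\max_{\pi}\ \widehat\Delta_k\,\pi(1)\quad\text{subject to}\quad D_{\mathrm{KL}}(\pi_k\,\|\,\pi)\le\eta .$$ Define the expected regret $\mathbb{E}[R_T]=\mathbb{E}\big[\sum_{t=1}^T\big(\tfrac{\Delta}{2}-r_t\big)\big]$. Then, with $\Phi$ the standard Gaussian cumulative distribution function, for every such instance, $$\mathbb{E}[R_T]\ \ge\ \frac{\Delta}{2}\,\Phi\!\left(-\frac{\sqrt{\tau}\,\Delta}{2\sigma}\right)\big(1-\exp(-\eta)\big)\,(T-\tau).$$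
   Context: $D_{\mathrm{KL}}(p\|q)=\sum_a p(a)\log\frac{p(a)}{q(a)}$ denotes the Kullback–Leibler divergence between distributions on $\{0,1\}$. The expectation is over all randomness of the actions and reward noise. *)

theory Defs
  imports "HOL-Probability.Probability"
begin

text \<open>Policies on the arms {0,1} are represented by the probability q = pi(1) of arm 1.
  Binary KL divergence D_KL(p || q) for p in [0,1], q in (0,1) (with 0 ln 0 = 0).\<close>
definition kl_bin :: "real \<Rightarrow> real \<Rightarrow> real" where
  "kl_bin p q = p * ln (p / q) + (1 - p) * ln ((1 - p) / (1 - q))"

definition Phi :: "real \<Rightarrow> real" where
  "Phi x = measure (density lborel std_normal_density) {..x}"

text \<open>upd is a TRPO update rule: for current policy p (in (0,1)) and estimated gap d it returns
  a maximiser of d * q subject to KL(p || q) \<le> eta. (Policies q \<in> {0,1} have infinite KL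
  divergence from an interior p, so they are never feasible.)\<close>
definition trpo_update :: "real \<Rightarrow> (real \<Rightarrow> real \<Rightarrow> real) \<Rightarrow> bool" where
  "trpo_update \<eta> upd \<longleftrightarrow>
     (\<forall>p d. 0 < p \<and> p < 1 \<longrightarrow>
        0 < upd p d \<and> upd p d < 1 \<and> kl_bin p (upd p d) \<le> \<eta> \<and>
        (\<forall>q. 0 < q \<and> q < 1 \<and> kl_bin p q \<le> \<eta> \<longrightarrow> d * q \<le> d * upd p d))"

text \<open>Randomness: for each phase k < K and step t < tau a pair (U, Z) with U uniform on [0,1]
  (the arm is 1 iff U < pi_k(1), i.e. drawn from pi_k) and Z ~ N(0, sigma^2) the reward noise;
  all pairs independent.\<close>
definition bandit_space :: "nat \<Rightarrow> nat \<Rightarrow> real \<Rightarrow> (nat \<times> nat \<Rightarrow> real \<times> real) measure" where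
  "bandit_space K \<tau> \<sigma> =
     PiM ({..<K} \<times> {..<\<tau>})
         (\<lambda>_. uniform_measure lborel {0..1} \<Otimes>\<^sub>M density lborel (normal_density 0 \<sigma>))"

type_synonym outcome = "nat \<times> nat \<Rightarrow> real \<times> real"

definition arm :: "outcome \<Rightarrow> real \<Rightarrow> nat \<Rightarrow> nat \<Rightarrow> bool" where
  "arm \<omega> p k t = (fst (\<omega> (k, t)) < p)"

definition reward :: "real \<Rightarrow> outcome \<Rightarrow> real \<Rightarrow> nat \<Rightarrow> nat \<Rightarrow> real" where
  "reward \<Delta> \<omega> p k t = (if arm \<omega> p k t then \<Delta> / 2 else - \<Delta> / 2) + snd (\<omega> (k, t))"

definition emp_mean :: "nat \<Rightarrow> real \<Rightarrow> outcome \<Rightarrow> real \<Rightarrow> nat \<Rightarrow> bool \<Rightarrow> real" where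
  "emp_mean \<tau> \<Delta> \<omega> p k a =
     (let S = {t. t < \<tau> \<and> arm \<omega> p k t = a} in
      if card S = 0 then 0 else (\<Sum>t\<in>S. reward \<Delta> \<omega> p k t) / real (card S))"

definition delta_hat :: "nat \<Rightarrow> real \<Rightarrow> outcome \<Rightarrow> real \<Rightarrow> nat \<Rightarrow> real" where
  "delta_hat \<tau> \<Delta> \<omega> p k = emp_mean \<tau> \<Delta> \<omega> p k True - emp_mean \<tau> \<Delta> \<omega> p k False"

text \<open>Policy (probability of arm 1) used in phase k (phases indexed from 0; phase 0 uses the
  uniform policy).\<close>
fun policy :: "(real \<Rightarrow> real \<Rightarrow> real) \<Rightarrow> nat \<Rightarrow> real \<Rightarrow> outcome \<Rightarrow> nat \<Rightarrow> real" where
  "policy upd \<tau> \<Delta> \<omega> 0 = 1 / 2"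
| "policy upd \<tau> \<Delta> \<omega> (Suc k) =
     upd (policy upd \<tau> \<Delta> \<omega> k) (delta_hat \<tau> \<Delta> \<omega> (policy upd \<tau> \<Delta> \<omega> k) k)"

definition regret :: "(real \<Rightarrow> real \<Rightarrow> real) \<Rightarrow> nat \<Rightarrow> nat \<Rightarrow> real \<Rightarrow> outcome \<Rightarrow> real" where
  "regret upd K \<tau> \<Delta> \<omega> =
     (\<Sum>k<K. \<Sum>t<\<tau>. \<Delta> / 2 - reward \<Delta> \<omega> (policy upd \<tau> \<Delta> \<omega> k) k t)"

end

theory Submission
  imports Defs
begin

lemma split_PiM:
  fixes N :: "'i \<Rightarrow> 'a measure"
  assumes N: "\<And>i. prob_space (N i)" and L: "finite L" "L \<noteq> {}" "A \<subseteq> L" "B \<subseteq> L" "A \<inter> B = {}"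
    and G: "G \<in> sets (PiM A N \<Otimes>\<^sub>M PiM B N)"
  shows "emeasure (PiM L N) {\<omega>\<in>space (PiM L N). (restrict \<omega> A, restrict \<omega> B) \<in> G}
         = emeasure (PiM A N \<Otimes>\<^sub>M PiM B N) G"
proof -
  interpret P: prob_space "PiM L N" using N by (intro prob_space_PiM) auto
  have d1: "distr (PiM L N) (PiM L N) (\<lambda>x. \<lambda>i\<in>L. x i) = PiM L N"
  proof -
    have "distr (PiM L N) (PiM L N) (\<lambda>x. \<lambda>i\<in>L. x i) = distr (PiM L N) (PiM L N) (\<lambda>x. x)"
      by (rule distr_cong) (auto simp: space_PiM)
    then show ?thesis by simp
  qed
  have d2: "PiM L (\<lambda>i. distr (PiM L N) (N i) (\<lambda>\<omega>. \<omega> i)) = PiM L N"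
    by (rule PiM_cong) (auto intro!: distr_PiM_component N)
  have ind: "P.indep_vars N (\<lambda>i \<omega>. \<omega> i) L"
    using L by (subst P.indep_vars_iff_distr_eq_PiM') (auto simp: d1 d2)
  have iv: "P.indep_var (PiM A N) (\<lambda>\<omega>. restrict \<omega> A) (PiM B N) (\<lambda>\<omega>. restrict \<omega> B)"
    using P.indep_var_restrict[OF ind L(5,3,4)] by simp
  have rA: "distr (PiM L N) (PiM A N) (\<lambda>\<omega>. restrict \<omega> A) = PiM A N"
    using distr_PiM_reindex[of L N id A] L N by (auto simp: restrict_def Pi_iff subset_eq)
  have rB: "distr (PiM L N) (PiM B N) (\<lambda>\<omega>. restrict \<omega> B) = PiM B N"
    using distr_PiM_reindex[of L N id B] L N by (auto simp: restrict_def Pi_iff subset_eq)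
  have eq: "PiM A N \<Otimes>\<^sub>M PiM B N = distr (PiM L N) (PiM A N \<Otimes>\<^sub>M PiM B N) (\<lambda>\<omega>. (restrict \<omega> A, restrict \<omega> B))"
    using iv unfolding P.indep_var_distribution_eq rA rB by simp
  have m: "(\<lambda>\<omega>. (restrict \<omega> A, restrict \<omega> B)) \<in> measurable (PiM L N) (PiM A N \<Otimes>\<^sub>M PiM B N)"
    using L by (intro measurable_Pair measurable_restrict_subset) auto
  show ?thesis
    apply (subst eq)
    apply (subst emeasure_distr[OF m G])
    apply (rule arg_cong[where f="emeasure (PiM L N)"])
    by auto
qed

lemma pair_emeasure_Times:
  assumes "prob_space M1" "prob_space M2" "X \<in> sets M1" "Y \<in> sets M2"
  shows "emeasure (M1 \<Otimes>\<^sub>M M2) (X \<times> Y) = emeasure M1 X * emeasure M2 Y"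
proof -
  interpret M2: prob_space M2 by fact
  show ?thesis using assms by (simp add: M2.emeasure_pair_measure_Times)
qed

lemma pair_measure_Times:
  assumes "prob_space M1" "prob_space M2" "X \<in> sets M1" "Y \<in> sets M2"
  shows "measure (M1 \<Otimes>\<^sub>M M2) (X \<times> Y) = measure M1 X * measure M2 Y"
  using pair_emeasure_Times[OF assms] by (simp add: measure_def enn2real_mult)

lemma enn2real_prod_emeasure:
  assumes "prob_space M"
  shows "enn2real (\<Prod>j\<in>J. emeasure M (a j)) = (\<Prod>j\<in>J. measure M (a j))"
proof -
  interpret prob_space M by fact
  show ?thesis by (simp add: emeasure_eq_measure prod_ennreal prod_nonneg)
qed

lemma zip_PiM:
  fixes A :: "'a measure" and B :: "'b measure" and J :: "'i set"
  assumes PA: "prob_space A" and PB: "prob_space B" and J: "finite J" "J \<noteq> {}"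
  shows "distr (PiM J (\<lambda>_. A) \<Otimes>\<^sub>M PiM J (\<lambda>_. B)) (PiM J (\<lambda>_. A \<Otimes>\<^sub>M B))
           (\<lambda>q. \<lambda>j\<in>J. (fst q j, snd q j)) = PiM J (\<lambda>_. A \<Otimes>\<^sub>M B)"
proof -
  define Q where "Q = PiM J (\<lambda>_. A) \<Otimes>\<^sub>M PiM J (\<lambda>_. B)"
  interpret A: prob_space A by fact
  interpret B: prob_space B by fact
  interpret IA: product_prob_space "\<lambda>_. A" J by unfold_locales
  interpret IB: product_prob_space "\<lambda>_. B" J by unfold_locales
  have pA: "prob_space (PiM J (\<lambda>_. A))" using PA by (intro prob_space_PiM)
  have pB: "prob_space (PiM J (\<lambda>_. B))" using PB by (intro prob_space_PiM)
  interpret Q: prob_space Q unfolding Q_def using pA pB by (intro prob_space_pair)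
  define W where "W = (\<lambda>j (q :: ('i \<Rightarrow> 'a) \<times> ('i \<Rightarrow> 'b)). (fst q j, snd q j))"
  have Wm: "W j \<in> measurable Q (A \<Otimes>\<^sub>M B)" if "j \<in> J" for j
    unfolding Q_def W_def using that
    by (intro measurable_Pair measurable_compose[OF measurable_fst measurable_component_singleton]
              measurable_compose[OF measurable_snd measurable_component_singleton])
  have Wpre: "W j -` (C \<times> D) \<inter> space Q =
      {x\<in>space (PiM J (\<lambda>_. A)). x j \<in> C} \<times> {y\<in>space (PiM J (\<lambda>_. B)). y j \<in> D}" for j C D
    unfolding W_def Q_def by (auto simp: space_pair_measure)
  have distW: "distr Q (A \<Otimes>\<^sub>M B) (W j) = A \<Otimes>\<^sub>M B" if j: "j \<in> J" for j
  proof (rule pair_measure_eqI[symmetric])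
    show "sigma_finite_measure A" "sigma_finite_measure B"
      using PA PB by (auto intro: prob_space_imp_sigma_finite)
    show "sets (A \<Otimes>\<^sub>M B) = sets (distr Q (A \<Otimes>\<^sub>M B) (W j))" by simp
    fix C D assume C: "C \<in> sets A" and D: "D \<in> sets B"
    have "emeasure (distr Q (A \<Otimes>\<^sub>M B) (W j)) (C \<times> D) = emeasure Q (W j -` (C \<times> D) \<inter> space Q)"
      using C D Wm[OF j] by (intro emeasure_distr) auto
    also have "\<dots> = emeasure A C * emeasure B D"
      unfolding Wpre unfolding Q_def
      using C D j by (subst pair_emeasure_Times[OF pA pB])
         (auto simp: IA.emeasure_PiM_Collect_single IB.emeasure_PiM_Collect_single)
    finally show "emeasure A C * emeasure B D = emeasure (distr Q (A \<Otimes>\<^sub>M B) (W j)) (C \<times> D)" ..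
  qed
  define E where "E = {a \<times> b | a b. a \<in> sets A \<and> b \<in> sets B}"
  have ind: "Q.indep_vars (\<lambda>_. A \<Otimes>\<^sub>M B) W J"
  proof (subst Q.indep_vars_finite[where E="\<lambda>_. E"])
    show "J \<noteq> {}" "finite J" by (fact J)+
    show "sets (A \<Otimes>\<^sub>M B) = sigma_sets (space (A \<Otimes>\<^sub>M B)) E" for i
      unfolding E_def by (simp add: sets_pair_measure space_pair_measure)
    show "W i \<in> measurable Q (A \<Otimes>\<^sub>M B)" if "i \<in> J" for i using Wm that .
    show "Int_stable E" for i unfolding E_def by (rule Int_stable_pair_measure_generator)
    show "space (A \<Otimes>\<^sub>M B) \<in> E" for i unfolding E_def by (auto simp: space_pair_measure)
    show "E \<subseteq> Pow (space (A \<Otimes>\<^sub>M B))" for i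
      unfolding E_def by (auto simp: space_pair_measure dest: sets.sets_into_space)
    show "\<forall>F\<in>J \<rightarrow> E. Q.prob (\<Inter>j\<in>J. W j -` F j \<inter> space Q) = (\<Prod>j\<in>J. Q.prob (W j -` F j \<inter> space Q))"
    proof
      fix F assume F: "F \<in> J \<rightarrow> E"
      then have "\<forall>j\<in>J. \<exists>a b. F j = a \<times> b \<and> a \<in> sets A \<and> b \<in> sets B" unfolding E_def by auto
      then obtain a b where ab: "\<And>j. j \<in> J \<Longrightarrow> F j = a j \<times> b j \<and> a j \<in> sets A \<and> b j \<in> sets B"
        by metis
      have eqS: "(\<Inter>j\<in>J. W j -` F j \<inter> space Q) =
          {x\<in>space (PiM J (\<lambda>_. A)). \<forall>j\<in>J. x j \<in> a j} \<times> {y\<in>space (PiM J (\<lambda>_. B)). \<forall>j\<in>J. y j \<in> b j}"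
        using J ab unfolding W_def Q_def by (auto simp: space_pair_measure)
      have sa: "{x\<in>space (PiM J (\<lambda>_. A)). \<forall>j\<in>J. x j \<in> a j} \<in> sets (PiM J (\<lambda>_. A))"
      proof -
        have "{x\<in>space (PiM J (\<lambda>_. A)). \<forall>j\<in>J. x j \<in> a j} = PiE J a"
          using ab sets.sets_into_space[of _ A] unfolding space_PiM PiE_def extensional_def by fastforce
        then show ?thesis using ab J by (auto intro!: sets_PiM_I_finite)
      qed
      have sb: "{x\<in>space (PiM J (\<lambda>_. B)). \<forall>j\<in>J. x j \<in> b j} \<in> sets (PiM J (\<lambda>_. B))"
      proof -
        have "{x\<in>space (PiM J (\<lambda>_. B)). \<forall>j\<in>J. x j \<in> b j} = PiE J b"
          using ab sets.sets_into_space[of _ B] unfolding space_PiM PiE_def extensional_def by fastforce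
        then show ?thesis using ab J by (auto intro!: sets_PiM_I_finite)
      qed
      have "Q.prob (\<Inter>j\<in>J. W j -` F j \<inter> space Q) = (\<Prod>j\<in>J. measure A (a j)) * (\<Prod>j\<in>J. measure B (b j))"
        unfolding eqS unfolding Q_def using J ab
        by (subst pair_measure_Times[OF pA pB sa sb])
           (auto simp: measure_def IA.emeasure_PiM_Collect IB.emeasure_PiM_Collect enn2real_prod_emeasure[OF PA] enn2real_prod_emeasure[OF PB])
      also have "\<dots> = (\<Prod>j\<in>J. Q.prob (W j -` F j \<inter> space Q))"
        unfolding prod.distrib[symmetric]
      proof (rule prod.cong[OF refl])
        fix j assume j: "j \<in> J"
        show "measure A (a j) * measure B (b j) = Q.prob (W j -` F j \<inter> space Q)"
          using ab[OF j] j unfolding conjunct1[OF ab[OF j]] Wpre unfolding Q_def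
          by (subst pair_measure_Times[OF pA pB])
             (auto simp: measure_def IA.emeasure_PiM_Collect_single IB.emeasure_PiM_Collect_single)
      qed
      finally show "Q.prob (\<Inter>j\<in>J. W j -` F j \<inter> space Q) = (\<Prod>j\<in>J. Q.prob (W j -` F j \<inter> space Q))" .
    qed
  qed
  have "distr Q (PiM J (\<lambda>_. A \<Otimes>\<^sub>M B)) (\<lambda>x. \<lambda>j\<in>J. W j x) = PiM J (\<lambda>j. distr Q (A \<Otimes>\<^sub>M B) (W j))"
    using ind J Wm by (subst (asm) Q.indep_vars_iff_distr_eq_PiM') auto
  also have "\<dots> = PiM J (\<lambda>_. A \<Otimes>\<^sub>M B)"
    by (rule PiM_cong) (auto simp: distW)
  finally show ?thesis unfolding Q_def W_def .
qed

lemma indep_coords: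
  fixes N :: "'i \<Rightarrow> 'a measure"
  assumes N: "\<And>i. prob_space (N i)" and L: "finite L" "L \<noteq> {}"
  shows "prob_space.indep_vars (PiM L N) N (\<lambda>i \<omega>. \<omega> i) L"
proof -
  interpret P: prob_space "PiM L N" using N by (intro prob_space_PiM) auto
  have d1: "distr (PiM L N) (PiM L N) (\<lambda>x. \<lambda>i\<in>L. x i) = PiM L N"
  proof -
    have "distr (PiM L N) (PiM L N) (\<lambda>x. \<lambda>i\<in>L. x i) = distr (PiM L N) (PiM L N) (\<lambda>x. x)"
      by (rule distr_cong) (auto simp: space_PiM)
    then show ?thesis by simp
  qed
  have d2: "PiM L (\<lambda>i. distr (PiM L N) (N i) (\<lambda>\<omega>. \<omega> i)) = PiM L N"
    by (rule PiM_cong) (auto intro!: distr_PiM_component N)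
  show ?thesis
    using L by (subst P.indep_vars_iff_distr_eq_PiM') (auto simp: d1 d2)
qed

lemma std_normal_less:
  "emeasure (density lborel std_normal_density) {..<c} = ennreal (Phi c)"
proof -
  interpret S: prob_space "density lborel std_normal_density"
    using prob_space_normal_density[of 1 0] by simp
  have "emeasure (density lborel std_normal_density) {c} = 0"
    by (subst emeasure_density) simp_all
  then have "emeasure (density lborel std_normal_density) {..c} = emeasure (density lborel std_normal_density) {..<c} + 0"
    using plus_emeasure[of "{..<c}" "density lborel std_normal_density" "{c}"]
    by (simp add: ivl_disj_un(2)[symmetric] Un_commute)
  then show ?thesis unfolding Phi_def S.emeasure_eq_measure by simp
qed

lemma gauss_sum:
  fixes T :: "'i set" and a :: "'i \<Rightarrow> real"
  assumes \<sigma>: "\<sigma> > 0" and T: "finite T" and v: "(\<Sum>t\<in>T. (a t)\<^sup>2) > 0"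
  shows "emeasure (PiM T (\<lambda>_. density lborel (normal_density 0 \<sigma>)))
           {z\<in>space (PiM T (\<lambda>_. density lborel (normal_density 0 \<sigma>))). \<mu> + (\<Sum>t\<in>T. a t * z t) < 0}
         = ennreal (Phi (- \<mu> / (\<sigma> * sqrt (\<Sum>t\<in>T. (a t)\<^sup>2))))"
proof -
  define N where "N = density lborel (normal_density 0 \<sigma>)"
  define P where "P = PiM T (\<lambda>_. N)"
  define T' where "T' = {t\<in>T. a t \<noteq> 0}"
  define s where "s = \<sigma> * sqrt (\<Sum>t\<in>T. (a t)\<^sup>2)"
  have NP: "prob_space N" unfolding N_def using \<sigma> by (rule prob_space_normal_density)
  interpret P: prob_space P unfolding P_def using NP by (intro prob_space_PiM)
  have T'fin: "finite T'" using T unfolding T'_def by auto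
  have T'ne: "T' \<noteq> {}"
  proof
    assume "T' = {}"
    then have "\<And>t. t \<in> T \<Longrightarrow> a t = 0" unfolding T'_def by auto
    then show False using v by simp
  qed
  have TT: "T \<noteq> {}" using T'ne unfolding T'_def by auto
  have sumeq: "(\<Sum>t\<in>T. a t * z t) = (\<Sum>t\<in>T'. a t * z t)" for z
    unfolding T'_def using T by (intro sum.mono_neutral_right) auto
  have sqeq: "(\<Sum>t\<in>T'. (\<bar>a t\<bar> * \<sigma>)\<^sup>2) = \<sigma>\<^sup>2 * (\<Sum>t\<in>T. (a t)\<^sup>2)"
  proof -
    have "(\<Sum>t\<in>T. (a t)\<^sup>2) = (\<Sum>t\<in>T'. (a t)\<^sup>2)"
      unfolding T'_def using T by (intro sum.mono_neutral_right) auto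
    then show ?thesis by (simp add: sum_distrib_left power_mult_distrib mult.commute)
  qed
  have coord: "distributed P lborel (\<lambda>z. z t) (normal_density 0 \<sigma>)" if t: "t \<in> T" for t
  proof -
    have "distr P lborel (\<lambda>z. z t) = distr P N (\<lambda>z. z t)"
      by (rule distr_cong) (auto simp: N_def)
    also have "\<dots> = N" unfolding P_def using NP t by (intro distr_PiM_component) auto
    finally show ?thesis unfolding distributed_def N_def P_def using t
      by (auto intro!: measurable_compose[OF measurable_component_singleton] simp: N_def)
  qed
  have Xd: "distributed P lborel (\<lambda>z. a t * z t) (normal_density 0 (\<bar>a t\<bar> * \<sigma>))" if t: "t \<in> T'" for t
    using P.normal_density_affine[OF coord \<sigma>, of t "a t" 0] t unfolding T'_def by auto
  have ind0: "P.indep_vars (\<lambda>_. N) (\<lambda>i \<omega>. \<omega> i) T"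
    unfolding P_def using indep_coords[of "\<lambda>_. N" T] NP T TT by auto
  have ind: "P.indep_vars (\<lambda>_. borel) (\<lambda>t z. a t * z t) T'"
  proof -
    have "P.indep_vars (\<lambda>_. borel) (\<lambda>t z. (\<lambda>x. a t * x) (z t)) T"
      by (rule P.indep_vars_compose2[OF ind0]) (auto simp: N_def)
    then show ?thesis by (rule P.indep_vars_subset) (auto simp: T'_def)
  qed
  have S: "distributed P lborel (\<lambda>z. \<Sum>t\<in>T'. a t * z t) (normal_density 0 s)"
  proof -
    have pos: "\<And>i. i \<in> T' \<Longrightarrow> 0 < \<bar>a i\<bar> * \<sigma>" using \<sigma> by (auto simp: T'_def)
    show ?thesis
      using P.sum_indep_normal[OF T'fin T'ne ind pos Xd] \<sigma>
      unfolding sqeq s_def by (simp add: real_sqrt_mult)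
  qed
  have spos: "s > 0" unfolding s_def using \<sigma> v by simp
  have S': "distributed P lborel (\<lambda>z. (\<Sum>t\<in>T'. a t * z t) / s) std_normal_density"
    using P.normal_standard_normal_convert[OF spos, of "\<lambda>z. \<Sum>t\<in>T'. a t * z t" 0] S by simp
  have "{z\<in>space P. \<mu> + (\<Sum>t\<in>T. a t * z t) < 0} = (\<lambda>z. (\<Sum>t\<in>T'. a t * z t) / s) -` {..< - \<mu> / s} \<inter> space P"
    using spos unfolding sumeq by (auto simp: field_simps)
  then have "emeasure P {z\<in>space P. \<mu> + (\<Sum>t\<in>T. a t * z t) < 0}
      = emeasure P ((\<lambda>z. (\<Sum>t\<in>T'. a t * z t) / s) -` {..< - \<mu> / s} \<inter> space P)" by simp
  also have "\<dots> = emeasure (distr P lborel (\<lambda>z. (\<Sum>t\<in>T'. a t * z t) / s)) {..< - \<mu> / s}"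
    by (rule emeasure_distr[symmetric]) (use S' in \<open>auto simp: distributed_def\<close>)
  also have "\<dots> = emeasure (density lborel std_normal_density) {..< - \<mu> / s}"
    using S' by (simp add: distributed_def)
  also have "\<dots> = ennreal (Phi (- \<mu> / s))" by (rule std_normal_less)
  finally show ?thesis unfolding P_def N_def s_def .
qed

abbreviation UM :: "real measure" where "UM \<equiv> uniform_measure lborel {0..1::real}"
abbreviation NM :: "real \<Rightarrow> real measure" where "NM \<sigma> \<equiv> density lborel (normal_density 0 \<sigma>)"

lemma sets_UN: "sets (UM \<Otimes>\<^sub>M NM \<sigma>) = sets (borel :: (real \<times> real) measure)"
proof -
  have "sets (UM \<Otimes>\<^sub>M NM \<sigma>) = sets (borel \<Otimes>\<^sub>M borel :: (real \<times> real) measure)"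
    by (rule sets_pair_measure_cong) simp_all
  then show ?thesis by (simp only: borel_prod)
qed

lemma comp_meas:
  assumes "sets M = sets (borel :: 'b::topological_space measure)"
  shows "(\<lambda>x. x i) \<in> measurable (PiM A (\<lambda>_. M)) (borel :: 'b measure)"
proof (cases "i \<in> A")
  case True
  then have "(\<lambda>x. x i) \<in> measurable (PiM A (\<lambda>_. M)) M" by (rule measurable_component_singleton)
  moreover have "measurable (PiM A (\<lambda>_. M)) M = measurable (PiM A (\<lambda>_. M)) (borel :: 'b measure)"
    by (rule measurable_cong_sets[OF refl assms])
  ultimately show ?thesis by simp
next
  case False
  have "(\<lambda>x. undefined) \<in> measurable (PiM A (\<lambda>_. M)) (borel :: 'b measure)" by (rule measurable_const) simp
  moreover have "\<And>x. x \<in> space (PiM A (\<lambda>_. M)) \<Longrightarrow> undefined = x i"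
    using False by (auto simp: space_PiM PiE_def extensional_def)
  ultimately show ?thesis using measurable_cong[of "PiM A (\<lambda>_. M)" "\<lambda>x. undefined" "\<lambda>x. x i" borel] by blast
qed

lemma sum_S: fixes \<tau> :: nat shows "(\<Sum>t\<in>{t. t < \<tau> \<and> P t}. f t) = (\<Sum>t<\<tau>. if P t then f t else 0 :: real)"
proof -
  have eq: "{t. t < \<tau> \<and> P t} = {t\<in>{..<\<tau>}. P t}" by auto
  show ?thesis unfolding eq by (rule sum.inter_filter) simp
qed

lemma card_sum: fixes \<tau> :: nat shows "real (card {t. t < \<tau> \<and> P t}) = (\<Sum>t<\<tau>. if P t then 1 else 0 :: real)"
  using sum_S[where f="\<lambda>_. 1" and \<tau>=\<tau> and P=P] by simp

lemma fst_borel: "fst \<in> borel_measurable (borel :: (real \<times> real) measure)"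
  by (subst borel_prod[symmetric]) (rule measurable_fst)

lemma snd_borel: "snd \<in> borel_measurable (borel :: (real \<times> real) measure)"
  by (subst borel_prod[symmetric]) (rule measurable_snd)

lemma emp_mean_alt:
  "emp_mean \<tau> \<Delta> \<omega> p k a =
    (if (\<Sum>t<\<tau>. if arm \<omega> p k t = a then 1 else 0 :: real) = 0 then 0
     else (\<Sum>t<\<tau>. if arm \<omega> p k t = a then reward \<Delta> \<omega> p k t else 0) / (\<Sum>t<\<tau>. if arm \<omega> p k t = a then 1 else 0 :: real))"
  unfolding emp_mean_def Let_def
  by (simp only: card_sum[symmetric] sum_S of_nat_eq_0_iff)

lemma meas_delta_hat:
  fixes g :: "'a \<Rightarrow> outcome"
  assumes g: "\<And>i. (\<lambda>x. g x i) \<in> borel_measurable M" and p: "p \<in> borel_measurable M"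
  shows "(\<lambda>x. delta_hat \<tau> \<Delta> (g x) (p x) k) \<in> borel_measurable M"
proof -
  have f: "(\<lambda>x. fst (g x i)) \<in> borel_measurable M" "(\<lambda>x. snd (g x i)) \<in> borel_measurable M" for i
    using measurable_compose[OF g[of i] fst_borel] measurable_compose[OF g[of i] snd_borel] by auto
  note [measurable] = f p
  show ?thesis
    unfolding delta_hat_def emp_mean_alt arm_def reward_def
    by measurable
qed

lemma meas_policy:
  fixes g :: "'a \<Rightarrow> outcome"
  assumes g: "\<And>i. (\<lambda>x. g x i) \<in> borel_measurable M" and u: "case_prod upd \<in> borel_measurable borel"
  shows "(\<lambda>x. policy upd \<tau> \<Delta> (g x) k) \<in> borel_measurable M"
proof (induction k)
  case 0 then show ?case by simp
next
  case (Suc k)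
  have d: "(\<lambda>x. delta_hat \<tau> \<Delta> (g x) (policy upd \<tau> \<Delta> (g x) k) k) \<in> borel_measurable M"
    by (rule meas_delta_hat[OF g Suc])
  have "(\<lambda>x. case_prod upd (policy upd \<tau> \<Delta> (g x) k, delta_hat \<tau> \<Delta> (g x) (policy upd \<tau> \<Delta> (g x) k) k)) \<in> borel_measurable M"
  proof (rule measurable_compose[OF _ u])
    have "(\<lambda>x. (policy upd \<tau> \<Delta> (g x) k, delta_hat \<tau> \<Delta> (g x) (policy upd \<tau> \<Delta> (g x) k) k)) \<in> measurable M (borel \<Otimes>\<^sub>M borel)"
      by (rule measurable_Pair[OF Suc d])
    then show "(\<lambda>x. (policy upd \<tau> \<Delta> (g x) k, delta_hat \<tau> \<Delta> (g x) (policy upd \<tau> \<Delta> (g x) k) k)) \<in> borel_measurable M"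
      by (simp only: borel_prod)
  qed
  then show ?case by simp
qed

lemma dh_dep:
  assumes "\<And>t. t < \<tau> \<Longrightarrow> \<omega> (k, t) = \<omega>' (k, t)"
  shows "delta_hat \<tau> \<Delta> \<omega> p k = delta_hat \<tau> \<Delta> \<omega>' p k"
proof -
  have "arm \<omega> p k t = arm \<omega>' p k t" "reward \<Delta> \<omega> p k t = reward \<Delta> \<omega>' p k t" if "t < \<tau>" for t
    using assms[OF that] by (simp_all add: arm_def reward_def)
  then have A: "\<And>t. t < \<tau> \<Longrightarrow> arm \<omega> p k t = arm \<omega>' p k t"
    and R: "\<And>t. t < \<tau> \<Longrightarrow> reward \<Delta> \<omega> p k t = reward \<Delta> \<omega>' p k t" by auto
  have e: "emp_mean \<tau> \<Delta> \<omega> p k a = emp_mean \<tau> \<Delta> \<omega>' p k a" for a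
  proof -
    have S: "{t. t < \<tau> \<and> arm \<omega> p k t = a} = {t. t < \<tau> \<and> arm \<omega>' p k t = a}" using A by auto
    have "(\<Sum>t\<in>{t. t < \<tau> \<and> arm \<omega>' p k t = a}. reward \<Delta> \<omega> p k t) = (\<Sum>t\<in>{t. t < \<tau> \<and> arm \<omega>' p k t = a}. reward \<Delta> \<omega>' p k t)"
      by (rule sum.cong) (auto simp: R)
    then show ?thesis unfolding emp_mean_def Let_def S by simp
  qed
  show ?thesis unfolding delta_hat_def e ..
qed

lemma pol_dep:
  assumes "\<And>k' t. k' < k \<Longrightarrow> t < \<tau> \<Longrightarrow> \<omega> (k', t) = \<omega>' (k', t)"
  shows "policy upd \<tau> \<Delta> \<omega> k = policy upd \<tau> \<Delta> \<omega>' k"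
  using assms
proof (induction k)
  case 0 then show ?case by simp
next
  case (Suc k)
  then have "policy upd \<tau> \<Delta> \<omega> k = policy upd \<tau> \<Delta> \<omega>' k" by auto
  moreover have "delta_hat \<tau> \<Delta> \<omega> p k = delta_hat \<tau> \<Delta> \<omega>' p k" for p
    using Suc.prems by (intro dh_dep) auto
  ultimately show ?case by simp
qed

lemma dh_formula:
  fixes u z :: "nat \<Rightarrow> real" and p :: real and \<tau> :: nat
  assumes om: "\<And>t. t < \<tau> \<Longrightarrow> \<omega> (j, t) = (u t, z t)"
  defines "n1 \<equiv> (\<Sum>t<\<tau>. if u t < p then 1 else 0 :: real)"
    and "n0 \<equiv> (\<Sum>t<\<tau>. if u t < p then 0 else 1 :: real)"
  shows "delta_hat \<tau> \<Delta> \<omega> p j =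
     ((if n1 = 0 then 0 else \<Delta> / 2) + (if n0 = 0 then 0 else \<Delta> / 2))
     + (\<Sum>t<\<tau>. (if u t < p then 1 / n1 else - 1 / n0) * z t)"
proof -
  have arm: "arm \<omega> p j t = (u t < p)" if "t < \<tau>" for t using om[OF that] by (simp add: arm_def)
  have rw: "reward \<Delta> \<omega> p j t = (if u t < p then \<Delta> / 2 else - \<Delta> / 2) + z t" if "t < \<tau>" for t
    using om[OF that] by (simp add: reward_def arm_def)
  define S1 where "S1 = (\<Sum>t<\<tau>. if u t < p then z t else 0)"
  define S0 where "S0 = (\<Sum>t<\<tau>. if u t < p then 0 else z t)"
  have c1: "(\<Sum>t<\<tau>. if arm \<omega> p j t = True then 1 else 0 :: real) = n1"
    unfolding n1_def by (rule sum.cong) (auto simp: arm)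
  have c0: "(\<Sum>t<\<tau>. if arm \<omega> p j t = False then 1 else 0 :: real) = n0"
    unfolding n0_def by (rule sum.cong) (auto simp: arm)
  have r1: "(\<Sum>t<\<tau>. if arm \<omega> p j t = True then reward \<Delta> \<omega> p j t else 0) = \<Delta> / 2 * n1 + S1"
  proof -
    have "(\<Sum>t<\<tau>. if arm \<omega> p j t = True then reward \<Delta> \<omega> p j t else 0)
        = (\<Sum>t<\<tau>. \<Delta> / 2 * (if u t < p then 1 else 0) + (if u t < p then z t else 0))"
      by (rule sum.cong) (auto simp: arm rw)
    also have "\<dots> = \<Delta> / 2 * n1 + S1"
      unfolding n1_def S1_def by (simp add: sum.distrib sum_distrib_left)
    finally show ?thesis .
  qed
  have r0: "(\<Sum>t<\<tau>. if arm \<omega> p j t = False then reward \<Delta> \<omega> p j t else 0) = - \<Delta> / 2 * n0 + S0"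
  proof -
    have "(\<Sum>t<\<tau>. if arm \<omega> p j t = False then reward \<Delta> \<omega> p j t else 0)
        = (\<Sum>t<\<tau>. - \<Delta> / 2 * (if u t < p then 0 else 1) + (if u t < p then 0 else z t))"
      by (rule sum.cong) (auto simp: arm rw)
    also have "\<dots> = - \<Delta> / 2 * n0 + S0"
      unfolding n0_def S0_def sum.distrib sum_distrib_left by simp
    finally show ?thesis .
  qed
  have S1z: "n1 = 0 \<Longrightarrow> S1 = 0"
  proof -
    assume "n1 = 0"
    then have "\<forall>t\<in>{..<\<tau>}. (if u t < p then 1 else 0 :: real) = 0"
      unfolding n1_def by (subst (asm) sum_nonneg_eq_0_iff) auto
    then show "S1 = 0" unfolding S1_def by (intro sum.neutral) (metis lessThan_iff zero_neq_one)
  qed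
  have S0z: "n0 = 0 \<Longrightarrow> S0 = 0"
  proof -
    assume "n0 = 0"
    then have "\<forall>t\<in>{..<\<tau>}. (if u t < p then 0 else 1 :: real) = 0"
      unfolding n0_def by (subst (asm) sum_nonneg_eq_0_iff) auto
    then show "S0 = 0" unfolding S0_def by (intro sum.neutral) (metis lessThan_iff zero_neq_one)
  qed
  have lin: "(\<Sum>t<\<tau>. (if u t < p then 1 / n1 else - 1 / n0) * z t) = S1 / n1 - S0 / n0"
  proof -
    have "(\<Sum>t<\<tau>. (if u t < p then 1 / n1 else - 1 / n0) * z t)
        = (\<Sum>t<\<tau>. (if u t < p then z t else 0) / n1 - (if u t < p then 0 else z t) / n0)"
      by (rule sum.cong) auto
    also have "\<dots> = S1 / n1 - S0 / n0"
      unfolding S1_def S0_def by (simp add: sum_subtractf sum_divide_distrib)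
    finally show ?thesis .
  qed
  show ?thesis
    unfolding delta_hat_def emp_mean_alt c1 c0 r1 r0 lin
    using S1z S0z by (auto simp: field_simps)
qed

lemma var_formula:
  fixes u :: "nat \<Rightarrow> real" and p :: real and \<tau> :: nat
  defines "n1 \<equiv> (\<Sum>t<\<tau>. if u t < p then 1 else 0 :: real)"
    and "n0 \<equiv> (\<Sum>t<\<tau>. if u t < p then 0 else 1 :: real)"
  shows "(\<Sum>t<\<tau>. (if u t < p then 1 / n1 else - 1 / n0)\<^sup>2) =
    (if n1 = 0 then 0 else 1 / n1) + (if n0 = 0 then 0 else 1 / n0)"
    and "n1 + n0 = real \<tau>" and "n1 \<ge> 0" and "n0 \<ge> 0"
proof -
  have "(\<Sum>t<\<tau>. (if u t < p then 1 / n1 else - 1 / n0)\<^sup>2)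
      = (\<Sum>t<\<tau>. (if u t < p then 1 else 0) * (1 / n1\<^sup>2) + (if u t < p then 0 else 1) * (1 / n0\<^sup>2))"
    by (rule sum.cong) (auto simp: power2_eq_square)
  also have "\<dots> = n1 / n1\<^sup>2 + n0 / n0\<^sup>2"
    unfolding n1_def n0_def sum.distrib sum_distrib_right[symmetric] by simp
  also have "\<dots> = (if n1 = 0 then 0 else 1 / n1) + (if n0 = 0 then 0 else 1 / n0)"
    by (simp add: power2_eq_square)
  finally show "(\<Sum>t<\<tau>. (if u t < p then 1 / n1 else - 1 / n0)\<^sup>2) =
    (if n1 = 0 then 0 else 1 / n1) + (if n0 = 0 then 0 else 1 / n0)" .
  have "n1 + n0 = (\<Sum>t<\<tau>. 1 :: real)" unfolding n1_def n0_def sum.distrib[symmetric]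
    by (rule sum.cong) auto
  then show "n1 + n0 = real \<tau>" by simp
  show "n1 \<ge> 0" "n0 \<ge> 0" unfolding n1_def n0_def by (auto intro!: sum_nonneg)
qed

lemma mu_v_bound:
  fixes n1 n0 \<Delta> \<sigma> :: real and \<tau> :: nat
  assumes "n1 \<ge> 0" "n0 \<ge> 0" "n1 + n0 = real \<tau>" "\<tau> > 0" "\<Delta> > 0" "\<sigma> > 0"
  defines "\<mu> \<equiv> (if n1 = 0 then 0 else \<Delta> / 2) + (if n0 = 0 then 0 else \<Delta> / 2)"
    and "v \<equiv> (if n1 = 0 then 0 else 1 / n1) + (if n0 = 0 then 0 else 1 / n0)"
  shows "v > 0" and "- sqrt (real \<tau>) * \<Delta> / (2 * \<sigma>) \<le> - \<mu> / (\<sigma> * sqrt v)"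
proof -
  have t: "real \<tau> > 0" using assms by simp
  show vpos: "v > 0"
  proof (cases "n1 = 0")
    case True then show ?thesis unfolding v_def using assms by auto
  next
    case False
    then have "n1 > 0" using assms by auto
    moreover have "(if n0 = 0 then 0 else 1 / n0) \<ge> 0" using assms by auto
    ultimately show ?thesis unfolding v_def using False by (simp add: add_pos_nonneg)
  qed
  have key: "\<mu> / sqrt v \<le> sqrt (real \<tau>) * \<Delta> / 2"
  proof (cases "n1 = 0")
    case True
    then have "n0 = real \<tau>" using assms by simp
    then have "\<mu> = \<Delta> / 2" "v = 1 / real \<tau>" using True t unfolding \<mu>_def v_def by auto
    then show ?thesis using t by (simp add: real_sqrt_divide)
  next
    case n1: False
    show ?thesis
    proof (cases "n0 = 0")
      case True
      then have "n1 = real \<tau>" using assms by simp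
      then have "\<mu> = \<Delta> / 2" "v = 1 / real \<tau>" using True t n1 unfolding \<mu>_def v_def by auto
      then show ?thesis using t by (simp add: real_sqrt_divide)
    next
      case n0: False
      have p1: "n1 > 0" "n0 > 0" using n1 n0 assms by auto
      have mv: "\<mu> = \<Delta>" "v = 1 / n1 + 1 / n0" using n1 n0 unfolding \<mu>_def v_def by auto
      have "4 \<le> real \<tau> * v"
      proof -
        have "real \<tau> * v = (n1 + n0) * (1 / n1 + 1 / n0)" using assms mv by simp
        also have "\<dots> = 2 + n1 / n0 + n0 / n1" using p1 by (simp add: field_simps)
        also have "\<dots> \<ge> 4"
        proof -
          have "n1 / n0 + n0 / n1 - 2 = (n1 - n0)\<^sup>2 / (n1 * n0)"
            using p1 by (simp add: field_simps power2_eq_square)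
          also have "\<dots> \<ge> 0" using p1 by simp
          finally show ?thesis by simp
        qed
        finally show ?thesis by simp
      qed
      then have "2 \<le> sqrt (real \<tau> * v)" using real_sqrt_le_mono[of 4] by simp
      then have "2 \<le> sqrt (real \<tau>) * sqrt v" by (simp add: real_sqrt_mult)
      then show ?thesis using vpos assms mv by (simp add: field_simps)
    qed
  qed
  have "(\<mu> / sqrt v) / \<sigma> \<le> (sqrt (real \<tau>) * \<Delta> / 2) / \<sigma>"
    using key by (rule divide_right_mono) (use assms(6) in simp)
  moreover have "- sqrt (real \<tau>) * \<Delta> / (2 * \<sigma>) = - ((sqrt (real \<tau>) * \<Delta> / 2) / \<sigma>)" by simp
  moreover have "- \<mu> / (\<sigma> * sqrt v) = - ((\<mu> / sqrt v) / \<sigma>)" by (simp add: mult.commute)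
  ultimately show "- sqrt (real \<tau>) * \<Delta> / (2 * \<sigma>) \<le> - \<mu> / (\<sigma> * sqrt v)" by linarith
qed

lemma Phi_mono: "x \<le> y \<Longrightarrow> Phi x \<le> Phi y"
proof -
  assume xy: "x \<le> y"
  interpret S: prob_space "density lborel std_normal_density"
    using prob_space_normal_density[of 1 0] by simp
  show ?thesis unfolding Phi_def using xy by (intro S.finite_measure_mono) auto
qed

lemma sum_J:
  fixes f :: "nat \<times> nat \<Rightarrow> real"
  shows "(\<Sum>i\<in>{j} \<times> {..<\<tau>}. f i) = (\<Sum>t<\<tau>. f (j, t))"
proof -
  have "{j} \<times> {..<\<tau>} = Pair j ` {..<\<tau>}" by auto
  moreover have "inj_on (Pair j) {..<\<tau>}" by (auto simp: inj_on_def)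
  ultimately show ?thesis by (simp add: sum.reindex)
qed

lemma phase_bound:
  fixes p :: real and j \<tau> :: nat
  assumes \<sigma>: "\<sigma> > 0" and \<Delta>: "\<Delta> > 0" and \<tau>: "\<tau> > 0"
  shows "ennreal (Phi (- sqrt (real \<tau>) * \<Delta> / (2 * \<sigma>))) \<le>
    emeasure (PiM ({j} \<times> {..<\<tau>}) (\<lambda>_. UM \<Otimes>\<^sub>M NM \<sigma>))
      {y\<in>space (PiM ({j} \<times> {..<\<tau>}) (\<lambda>_. UM \<Otimes>\<^sub>M NM \<sigma>)). delta_hat \<tau> \<Delta> y p j < 0}"
proof -
  define J where "J = {j} \<times> {..<\<tau>}"
  define PU where "PU = PiM J (\<lambda>_. UM)"
  define PN where "PN = PiM J (\<lambda>_. NM \<sigma>)"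
  define Q where "Q = PU \<Otimes>\<^sub>M PN"
  define zp where "zp = (\<lambda>q::(nat\<times>nat\<Rightarrow>real)\<times>(nat\<times>nat\<Rightarrow>real). \<lambda>i\<in>J. (fst q i, snd q i))"
  define c0 where "c0 = Phi (- sqrt (real \<tau>) * \<Delta> / (2 * \<sigma>))"
  have Jfin: "finite J" and Jne: "J \<noteq> {}" using \<tau> by (auto simp: J_def)
  have UMp: "prob_space UM" by (rule prob_space_uniform_measure) auto
  have NMp: "prob_space (NM \<sigma>)" using \<sigma> by (rule prob_space_normal_density)
  interpret PU: prob_space PU unfolding PU_def using UMp by (intro prob_space_PiM)
  interpret PN: prob_space PN unfolding PN_def using NMp by (intro prob_space_PiM)
  have eq: "distr Q (PiM J (\<lambda>_. UM \<Otimes>\<^sub>M NM \<sigma>)) zp = PiM J (\<lambda>_. UM \<Otimes>\<^sub>M NM \<sigma>)"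
    unfolding Q_def PU_def PN_def zp_def by (rule zip_PiM[OF UMp NMp Jfin Jne])
  have zm: "zp \<in> measurable Q (PiM J (\<lambda>_. UM \<Otimes>\<^sub>M NM \<sigma>))"
    unfolding zp_def Q_def PU_def PN_def
    by (intro measurable_restrict measurable_Pair
          measurable_compose[OF measurable_fst measurable_component_singleton]
          measurable_compose[OF measurable_snd measurable_component_singleton])
  define S where "S = {y\<in>space (PiM J (\<lambda>_. UM \<Otimes>\<^sub>M NM \<sigma>)). delta_hat \<tau> \<Delta> y p j < 0}"
  have Sm: "S \<in> sets (PiM J (\<lambda>_. UM \<Otimes>\<^sub>M NM \<sigma>))"
  proof -
    have [measurable]: "(\<lambda>y. delta_hat \<tau> \<Delta> y p j) \<in> borel_measurable (PiM J (\<lambda>_. UM \<Otimes>\<^sub>M NM \<sigma>))"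
      by (rule meas_delta_hat[where g="\<lambda>y. y" and p="\<lambda>_. p", OF comp_meas[OF sets_UN]]) simp
    show ?thesis unfolding S_def by measurable
  qed
  have inner: "ennreal c0 \<le> emeasure PN (Pair u -` (zp -` S \<inter> space Q))" if u: "u \<in> space PU" for u
  proof -
    define n1 where "n1 = (\<Sum>t<\<tau>. if u (j, t) < p then 1 else 0 :: real)"
    define n0 where "n0 = (\<Sum>t<\<tau>. if u (j, t) < p then 0 else 1 :: real)"
    define \<mu> where "\<mu> = (if n1 = 0 then 0 else \<Delta> / 2) + (if n0 = 0 then 0 else \<Delta> / 2)"
    define c where "c = (\<lambda>t. if u (j, t) < p then 1 / n1 else - 1 / n0)"
    define v where "v = (if n1 = 0 then 0 else 1 / n1) + (if n0 = 0 then 0 else 1 / n0)"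
    have vf: "(\<Sum>t<\<tau>. (c t)\<^sup>2) = v" "n1 + n0 = real \<tau>" "n1 \<ge> 0" "n0 \<ge> 0"
      using var_formula[where u="\<lambda>t. u (j, t)" and p=p and \<tau>=\<tau>] unfolding c_def v_def n1_def n0_def by auto
    have vpos: "v > 0" and bnd: "c0 \<le> Phi (- \<mu> / (\<sigma> * sqrt v))"
      using mu_v_bound[OF vf(3,4,2) \<tau> \<Delta> \<sigma>] Phi_mono unfolding \<mu>_def v_def c0_def by auto
    have dh: "delta_hat \<tau> \<Delta> (zp (u, z)) p j = \<mu> + (\<Sum>i\<in>J. c (snd i) * z i)" for z
    proof -
      have "delta_hat \<tau> \<Delta> (zp (u, z)) p j = \<mu> + (\<Sum>t<\<tau>. c t * z (j, t))"
        unfolding \<mu>_def c_def n1_def n0_def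
        by (rule dh_formula[where \<tau>=\<tau> and \<omega>="zp (u, z)" and j=j and u="\<lambda>t. u (j, t)" and z="\<lambda>t. z (j, t)"]) (simp add: zp_def J_def)
      then show ?thesis unfolding J_def sum_J by simp
    qed
    have set_eq: "Pair u -` (zp -` S \<inter> space Q) = {z\<in>space PN. \<mu> + (\<Sum>i\<in>J. c (snd i) * z i) < 0}"
    proof -
      have "zp (u, z) \<in> space (PiM J (\<lambda>_. UM \<Otimes>\<^sub>M NM \<sigma>))" if "z \<in> space PN" for z
        using measurable_space[OF zm, of "(u, z)"] u that by (simp add: Q_def space_pair_measure)
      then show ?thesis using u unfolding S_def by (auto simp: Q_def space_pair_measure dh)
    qed
    have vJ: "(\<Sum>i\<in>J. (c (snd i))\<^sup>2) = v" unfolding J_def sum_J using vf(1) by simp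
    have "emeasure PN (Pair u -` (zp -` S \<inter> space Q)) = ennreal (Phi (- \<mu> / (\<sigma> * sqrt v)))"
      unfolding set_eq PN_def using gauss_sum[OF \<sigma> Jfin, of "\<lambda>i. c (snd i)" \<mu>] vJ vpos by simp
    then show ?thesis using bnd by (simp add: ennreal_leI)
  qed
  have "ennreal c0 = (\<integral>\<^sup>+u. ennreal c0 \<partial>PU)" by (simp add: PU.emeasure_space_1)
  also have "\<dots> \<le> (\<integral>\<^sup>+u. emeasure PN (Pair u -` (zp -` S \<inter> space Q)) \<partial>PU)"
    by (rule nn_integral_mono) (rule inner)
  also have "\<dots> = emeasure Q (zp -` S \<inter> space Q)"
    unfolding Q_def by (rule PN.emeasure_pair_measure_alt[symmetric]) (use measurable_sets[OF zm Sm] in \<open>simp add: Q_def\<close>)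
  also have "\<dots> = emeasure (distr Q (PiM J (\<lambda>_. UM \<Otimes>\<^sub>M NM \<sigma>)) zp) S"
    by (rule emeasure_distr[OF zm Sm, symmetric])
  also have "\<dots> = emeasure (PiM J (\<lambda>_. UM \<Otimes>\<^sub>M NM \<sigma>)) S" unfolding eq ..
  finally show ?thesis unfolding c0_def S_def J_def .
qed

lemma kl_ok:
  fixes p q :: real
  assumes q: "0 < q" "q < 1" and pq: "q \<le> p" "p < 1" and \<eta>: "q = exp (- \<eta>)"
  shows "kl_bin p q \<le> \<eta>"
proof -
  have p0: "0 < p" using q pq by linarith
  have lnq: "ln q = - \<eta>" using \<eta> by simp
  have a: "p * ln p \<le> 0" using p0 pq by (simp add: mult_nonneg_nonpos)
  have "q * (1 - p) \<le> 1 * (1 - p)" using q pq by (intro mult_right_mono) auto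
  moreover have "1 * (1 - p) \<le> 1 - q" using pq by simp
  ultimately have "q * (1 - p) \<le> 1 - q" by (rule order_trans)
  then have "ln (q * (1 - p)) \<le> ln (1 - q)" using q pq by (subst ln_le_cancel_iff) auto
  then have b: "ln q + ln (1 - p) - ln (1 - q) \<le> 0" using q pq by (simp add: ln_mult)
  have "kl_bin p q = p * ln p + p * \<eta> + (1 - p) * (ln (1 - p) - ln (1 - q))"
    unfolding kl_bin_def using q pq p0 by (simp add: ln_div lnq algebra_simps)
  also have "\<dots> = \<eta> + p * ln p + (1 - p) * (ln q + ln (1 - p) - ln (1 - q))"
    using lnq by (simp add: algebra_simps)
  also have "\<dots> \<le> \<eta>" using a b pq by (smt (verit) mult_nonneg_nonpos)
  finally show ?thesis .
qed

lemma upd_small: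
  assumes tr: "trpo_update \<eta> upd" and \<eta>: "\<eta> > 0" and p: "0 < p" "p < 1" and d: "d < 0"
  shows "upd p d \<le> exp (- \<eta>)"
proof -
  have props: "0 < upd p d" "upd p d < 1"
    "\<And>q. 0 < q \<Longrightarrow> q < 1 \<Longrightarrow> kl_bin p q \<le> \<eta> \<Longrightarrow> d * q \<le> d * upd p d"
    using tr p unfolding trpo_update_def by blast+
  have e: "0 < exp (- \<eta>)" "exp (- \<eta>) < 1" using \<eta> by auto
  show ?thesis
  proof (cases "p \<le> exp (- \<eta>)")
    case True
    have "kl_bin p p = 0" unfolding kl_bin_def using p by simp
    then have "d * p \<le> d * upd p d" using props(3)[of p] p \<eta> by simp
    then have "upd p d \<le> p" using d by (simp add: mult_le_cancel_left)
    then show ?thesis using True by simp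
  next
    case False
    have "kl_bin p (exp (- \<eta>)) \<le> \<eta>" using kl_ok[OF e, of p \<eta>] False p by simp
    then have "d * exp (- \<eta>) \<le> d * upd p d" using props(3) e by blast
    then show ?thesis using d by (simp add: mult_le_cancel_left)
  qed
qed

lemma pol_range:
  assumes tr: "trpo_update \<eta> upd"
  shows "0 < policy upd \<tau> \<Delta> \<omega> k \<and> policy upd \<tau> \<Delta> \<omega> k < 1"
proof (induction k)
  case 0 then show ?case by simp
next
  case (Suc k) then show ?case using tr unfolding trpo_update_def by simp
qed

lemma Phi_nonneg: "0 \<le> Phi x" unfolding Phi_def by simp

lemma UM_ge: assumes "0 \<le> e" "e \<le> 1" shows "emeasure UM {e..} = ennreal (1 - e)"
proof -
  have "{0..1::real} \<inter> {e..} = {e..1}" using assms by auto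
  then show ?thesis using assms by (simp add: divide_ennreal_def)
qed

lemma event_bound:
  fixes \<sigma> \<Delta> \<eta> :: real and K \<tau> j t :: nat and upd :: "real \<Rightarrow> real \<Rightarrow> real"
  assumes \<sigma>: "\<sigma> > 0" and \<Delta>: "\<Delta> > 0" and \<eta>: "\<eta> > 0" and um: "case_prod upd \<in> borel_measurable borel"
    and \<tau>: "\<tau> > 0" and jK: "Suc j < K" and t: "t < \<tau>"
  shows "ennreal (Phi (- sqrt (real \<tau>) * \<Delta> / (2 * \<sigma>)) * (1 - exp (- \<eta>))) \<le>
    emeasure (PiM ({..<K} \<times> {..<\<tau>}) (\<lambda>_. UM \<Otimes>\<^sub>M NM \<sigma>))
      {\<omega>\<in>space (PiM ({..<K} \<times> {..<\<tau>}) (\<lambda>_. UM \<Otimes>\<^sub>M NM \<sigma>)).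
         exp (- \<eta>) \<le> fst (\<omega> (Suc j, t)) \<and> delta_hat \<tau> \<Delta> \<omega> (policy upd \<tau> \<Delta> \<omega> j) j < 0}"
proof -
  define L where "L = {..<K} \<times> {..<\<tau>}"
  define N where "N = UM \<Otimes>\<^sub>M NM \<sigma>"
  define A where "A = {..<j} \<times> {..<\<tau>} \<union> {(Suc j, t)}"
  define B where "B = {j} \<times> {..<\<tau>}"
  define c0 where "c0 = Phi (- sqrt (real \<tau>) * \<Delta> / (2 * \<sigma>))"
  define e where "e = exp (- \<eta>)"
  have e01: "0 \<le> e" "e \<le> 1" unfolding e_def using \<eta> by auto
  have UMp: "prob_space UM" by (rule prob_space_uniform_measure) auto
  have NMp: "prob_space (NM \<sigma>)" using \<sigma> by (rule prob_space_normal_density)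
  have Np: "prob_space N" unfolding N_def using UMp NMp by (intro prob_space_pair)
  interpret Nps: prob_space N by (fact Np)
  interpret PA: product_prob_space "\<lambda>_. N" A by unfold_locales
  interpret PB: prob_space "PiM B (\<lambda>_. N)" using Np by (intro prob_space_PiM)
  have sN: "sets N = sets (borel :: (real \<times> real) measure)" unfolding N_def by (rule sets_UN)
  define G where "G = {q\<in>space (PiM A (\<lambda>_. N) \<Otimes>\<^sub>M PiM B (\<lambda>_. N)).
      e \<le> fst (fst q (Suc j, t)) \<and> delta_hat \<tau> \<Delta> (snd q) (policy upd \<tau> \<Delta> (fst q) j) j < 0}"
  have Gm: "G \<in> sets (PiM A (\<lambda>_. N) \<Otimes>\<^sub>M PiM B (\<lambda>_. N))"
  proof -
    have f1: "(\<lambda>q. fst q i) \<in> borel_measurable (PiM A (\<lambda>_. N) \<Otimes>\<^sub>M PiM B (\<lambda>_. N))" for i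
      by (rule measurable_compose[OF measurable_fst comp_meas[OF sN]])
    have f2: "(\<lambda>q. snd q i) \<in> borel_measurable (PiM A (\<lambda>_. N) \<Otimes>\<^sub>M PiM B (\<lambda>_. N))" for i
      by (rule measurable_compose[OF measurable_snd comp_meas[OF sN]])
    have [measurable]: "(\<lambda>q. fst (fst q (Suc j, t))) \<in> borel_measurable (PiM A (\<lambda>_. N) \<Otimes>\<^sub>M PiM B (\<lambda>_. N))"
      by (rule measurable_compose[OF f1 fst_borel])
    have pm: "(\<lambda>q. policy upd \<tau> \<Delta> (fst q) j) \<in> borel_measurable (PiM A (\<lambda>_. N) \<Otimes>\<^sub>M PiM B (\<lambda>_. N))"
      by (rule meas_policy[where g=fst, OF f1 um])
    have [measurable]: "(\<lambda>q. delta_hat \<tau> \<Delta> (snd q) (policy upd \<tau> \<Delta> (fst q) j) j) \<in> borel_measurable (PiM A (\<lambda>_. N) \<Otimes>\<^sub>M PiM B (\<lambda>_. N))"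
      by (rule meas_delta_hat[where g=snd, OF f2 pm])
    show ?thesis unfolding G_def by measurable
  qed
  have AL: "A \<subseteq> L" and BL: "B \<subseteq> L" and AB: "A \<inter> B = {}" and Lfin: "finite L" and Lne: "L \<noteq> {}"
    using jK t \<tau> unfolding A_def B_def L_def by auto
  have seteq: "{\<omega>\<in>space (PiM L (\<lambda>_. N)). e \<le> fst (\<omega> (Suc j, t)) \<and> delta_hat \<tau> \<Delta> \<omega> (policy upd \<tau> \<Delta> \<omega> j) j < 0}
      = {\<omega>\<in>space (PiM L (\<lambda>_. N)). (restrict \<omega> A, restrict \<omega> B) \<in> G}"
  proof -
    have "(e \<le> fst (\<omega> (Suc j, t)) \<and> delta_hat \<tau> \<Delta> \<omega> (policy upd \<tau> \<Delta> \<omega> j) j < 0) \<longleftrightarrow> (restrict \<omega> A, restrict \<omega> B) \<in> G"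
      if w: "\<omega> \<in> space (PiM L (\<lambda>_. N))" for \<omega>
    proof -
      have sp: "(restrict \<omega> A, restrict \<omega> B) \<in> space (PiM A (\<lambda>_. N) \<Otimes>\<^sub>M PiM B (\<lambda>_. N))"
        using w AL BL by (auto simp: space_pair_measure space_PiM PiE_iff)
      have p: "policy upd \<tau> \<Delta> (restrict \<omega> A) j = policy upd \<tau> \<Delta> \<omega> j"
        by (rule pol_dep) (auto simp: A_def)
      have d: "delta_hat \<tau> \<Delta> (restrict \<omega> B) p j = delta_hat \<tau> \<Delta> \<omega> p j" for p
        by (rule dh_dep) (auto simp: B_def)
      have r: "restrict \<omega> A (Suc j, t) = \<omega> (Suc j, t)" by (simp add: A_def)
      show ?thesis using sp unfolding G_def by (simp only: p d r mem_Collect_eq fst_conv snd_conv simp_thms)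
    qed
    then show ?thesis by blast
  qed
  define X where "X = {x\<in>space (PiM A (\<lambda>_. N)). x (Suc j, t) \<in> {e..} \<times> UNIV}"
  have eN: "{e..} \<times> UNIV \<in> sets N"
  proof -
    have "{e..} \<times> UNIV \<in> sets (borel \<Otimes>\<^sub>M borel :: (real \<times> real) measure)" by (intro pair_measureI) auto
    then show "{e..} \<times> UNIV \<in> sets N" unfolding sN by (simp only: borel_prod)
  qed
  have Xm: "X \<in> sets (PiM A (\<lambda>_. N))"
    using eN unfolding X_def by (auto simp: A_def)
  have EX: "emeasure (PiM A (\<lambda>_. N)) X = ennreal (1 - e)"
  proof -
    have "emeasure (PiM A (\<lambda>_. N)) X = emeasure N ({e..} \<times> UNIV)"
      unfolding X_def by (rule PA.emeasure_PiM_Collect_single) (auto simp: A_def eN)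
    also have "\<dots> = emeasure UM {e..} * emeasure (NM \<sigma>) UNIV"
      unfolding N_def using pair_emeasure_Times[OF UMp NMp, of "{e..}" UNIV] by simp
    also have "\<dots> = ennreal (1 - e)"
      using UM_ge[OF e01] prob_space.emeasure_space_1[OF NMp] by simp
    finally show ?thesis .
  qed
  have inner: "ennreal c0 * indicator X x \<le> emeasure (PiM B (\<lambda>_. N)) (Pair x -` G)"
    if x: "x \<in> space (PiM A (\<lambda>_. N))" for x
  proof (cases "x \<in> X")
    case True
    then have "Pair x -` G = {y\<in>space (PiM B (\<lambda>_. N)). delta_hat \<tau> \<Delta> y (policy upd \<tau> \<Delta> x j) j < 0}"
      using x unfolding G_def X_def by (auto simp: space_pair_measure)
    then show ?thesis using True phase_bound[OF \<sigma> \<Delta> \<tau>, of j "policy upd \<tau> \<Delta> x j"]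
      unfolding B_def N_def c0_def by simp
  next
    case False then show ?thesis by simp
  qed
  have "ennreal (c0 * (1 - e)) = ennreal c0 * emeasure (PiM A (\<lambda>_. N)) X"
    unfolding EX using Phi_nonneg e01 unfolding c0_def by (simp add: ennreal_mult)
  also have "\<dots> = (\<integral>\<^sup>+x. ennreal c0 * indicator X x \<partial>PiM A (\<lambda>_. N))"
    by (rule nn_integral_cmult_indicator[OF Xm, symmetric])
  also have "\<dots> \<le> (\<integral>\<^sup>+x. emeasure (PiM B (\<lambda>_. N)) (Pair x -` G) \<partial>PiM A (\<lambda>_. N))"
    by (rule nn_integral_mono) (rule inner)
  also have "\<dots> = emeasure (PiM A (\<lambda>_. N) \<Otimes>\<^sub>M PiM B (\<lambda>_. N)) G"
    by (rule PB.emeasure_pair_measure_alt[OF Gm, symmetric])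
  also have "\<dots> = emeasure (PiM L (\<lambda>_. N)) {\<omega>\<in>space (PiM L (\<lambda>_. N)). (restrict \<omega> A, restrict \<omega> B) \<in> G}"
    by (rule split_PiM[OF Np Lfin Lne AL BL AB Gm, symmetric])
  finally have "ennreal (c0 * (1 - e)) \<le> emeasure (PiM L (\<lambda>_. N)) {\<omega>\<in>space (PiM L (\<lambda>_. N)). (restrict \<omega> A, restrict \<omega> B) \<in> G}" .
  then show ?thesis unfolding seteq[symmetric] unfolding L_def N_def c0_def e_def .
qed

lemma distr_snd_pair:
  assumes \<sigma>: "\<sigma> > 0"
  shows "distr (UM \<Otimes>\<^sub>M NM \<sigma>) (NM \<sigma>) snd = NM \<sigma>"
proof (rule measure_eqI)
  have UMp: "prob_space UM" by (rule prob_space_uniform_measure) auto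
  have NMp: "prob_space (NM \<sigma>)" using \<sigma> by (rule prob_space_normal_density)
  show "sets (distr (UM \<Otimes>\<^sub>M NM \<sigma>) (NM \<sigma>) snd) = sets (NM \<sigma>)" by simp
  fix A assume A: "A \<in> sets (distr (UM \<Otimes>\<^sub>M NM \<sigma>) (NM \<sigma>) snd)"
  then have A': "A \<in> sets (NM \<sigma>)" by simp
  have "snd -` A \<inter> space (UM \<Otimes>\<^sub>M NM \<sigma>) = space UM \<times> A"
    using sets.sets_into_space[OF A'] by (auto simp: space_pair_measure)
  then have "emeasure (distr (UM \<Otimes>\<^sub>M NM \<sigma>) (NM \<sigma>) snd) A = emeasure (UM \<Otimes>\<^sub>M NM \<sigma>) (space UM \<times> A)"
    using A' by (simp add: emeasure_distr)
  also have "\<dots> = emeasure (NM \<sigma>) A"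
    using pair_emeasure_Times[OF UMp NMp sets.top A'] prob_space.emeasure_space_1[OF UMp] by simp
  finally show "emeasure (distr (UM \<Otimes>\<^sub>M NM \<sigma>) (NM \<sigma>) snd) A = emeasure (NM \<sigma>) A" .
qed

lemma Z_int:
  assumes \<sigma>: "\<sigma> > 0" and i: "i \<in> L"
  shows "integrable (PiM L (\<lambda>_. UM \<Otimes>\<^sub>M NM \<sigma>)) (\<lambda>\<omega>. snd (\<omega> i))"
    and "integral\<^sup>L (PiM L (\<lambda>_. UM \<Otimes>\<^sub>M NM \<sigma>)) (\<lambda>\<omega>. snd (\<omega> i)) = 0"
proof -
  define P where "P = PiM L (\<lambda>_. UM \<Otimes>\<^sub>M NM \<sigma>)"
  have UMp: "prob_space UM" by (rule prob_space_uniform_measure) auto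
  have NMp: "prob_space (NM \<sigma>)" using \<sigma> by (rule prob_space_normal_density)
  have Np: "prob_space (UM \<Otimes>\<^sub>M NM \<sigma>)" using UMp NMp by (intro prob_space_pair)
  have m1: "(\<lambda>\<omega>. \<omega> i) \<in> measurable P (UM \<Otimes>\<^sub>M NM \<sigma>)" unfolding P_def using i by simp
  have m: "(\<lambda>\<omega>. snd (\<omega> i)) \<in> measurable P (NM \<sigma>)"
    by (rule measurable_compose[OF m1 measurable_snd])
  have d: "distr P (NM \<sigma>) (\<lambda>\<omega>. snd (\<omega> i)) = NM \<sigma>"
  proof -
    have "distr P (NM \<sigma>) (\<lambda>\<omega>. snd (\<omega> i)) = distr (distr P (UM \<Otimes>\<^sub>M NM \<sigma>) (\<lambda>\<omega>. \<omega> i)) (NM \<sigma>) snd"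
      using distr_distr[OF measurable_snd m1] by (simp add: comp_def)
    also have "distr P (UM \<Otimes>\<^sub>M NM \<sigma>) (\<lambda>\<omega>. \<omega> i) = UM \<Otimes>\<^sub>M NM \<sigma>"
      unfolding P_def using Np i by (intro distr_PiM_component) auto
    finally show ?thesis using distr_snd_pair[OF \<sigma>] by simp
  qed
  have iN: "integrable (NM \<sigma>) (\<lambda>x. x)"
    by (subst integrable_density) (auto simp: integrable_normal_moment_nz_1[OF \<sigma>])
  have inN: "integral\<^sup>L (NM \<sigma>) (\<lambda>x. x) = 0"
    by (subst integral_density) (auto simp: integral_normal_moment_nz_1[OF \<sigma>])
  have "integrable (distr P (NM \<sigma>) (\<lambda>\<omega>. snd (\<omega> i))) (\<lambda>x. x)" unfolding d by (rule iN)
  then show "integrable (PiM L (\<lambda>_. UM \<Otimes>\<^sub>M NM \<sigma>)) (\<lambda>\<omega>. snd (\<omega> i))"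
    unfolding P_def[symmetric] by (subst (asm) integrable_distr_eq[OF m]) auto
  have "integral\<^sup>L (distr P (NM \<sigma>) (\<lambda>\<omega>. snd (\<omega> i))) (\<lambda>x. x) = 0" unfolding d by (rule inN)
  then show "integral\<^sup>L (PiM L (\<lambda>_. UM \<Otimes>\<^sub>M NM \<sigma>)) (\<lambda>\<omega>. snd (\<omega> i)) = 0"
    unfolding P_def[symmetric] by (subst (asm) integral_distr[OF m]) auto
qed

lemma sum_if0: "(\<Sum>k<K. if k = 0 then 0 else C) = (real K - 1) * (C :: real)" if "K > 0"
  using that
proof (induction K)
  case 0 then show ?case by simp
next
  case (Suc K) then show ?case by (cases "K = 0") (auto simp: algebra_simps)
qed

theorem lemma2:
  fixes \<Delta> \<sigma> \<eta> :: real and K \<tau> :: nat and upd :: "real \<Rightarrow> real \<Rightarrow> real"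
  assumes "\<Delta> > 0" and "\<sigma> > 0" and "\<eta> > 0"
    and "trpo_update \<eta> upd"
    and "case_prod upd \<in> borel_measurable borel"
  shows "(\<integral>\<omega>. regret upd K \<tau> \<Delta> \<omega> \<partial>bandit_space K \<tau> \<sigma>)
           \<ge> \<Delta> / 2 * Phi (- sqrt (real \<tau>) * \<Delta> / (2 * \<sigma>)) * (1 - exp (- \<eta>))
             * (real K * real \<tau> - real \<tau>)"
proof -
  note \<Delta> = assms(1) and \<sigma> = assms(2) and \<eta> = assms(3) and tr = assms(4) and um = assms(5)
  define c0 where "c0 = Phi (- sqrt (real \<tau>) * \<Delta> / (2 * \<sigma>))"
  define e where "e = exp (- \<eta>)"
  have c0: "0 \<le> c0" unfolding c0_def by (rule Phi_nonneg)
  have e01: "0 \<le> 1 - e" unfolding e_def using \<eta> by auto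
  show ?thesis
  proof (cases "K = 0 \<or> \<tau> = 0")
    case True
    then have "regret upd K \<tau> \<Delta> \<omega> = 0" for \<omega> unfolding regret_def by auto
    moreover have "real K * real \<tau> - real \<tau> \<le> 0" using True by auto
    moreover have "0 \<le> \<Delta> / 2 * c0 * (1 - e)" using c0 e01 \<Delta> by simp
    ultimately show ?thesis unfolding c0_def[symmetric] e_def[symmetric]
      by (simp add: mult_nonneg_nonpos)
  next
    case False
    then have K: "K > 0" and \<tau>: "\<tau> > 0" by auto
    define L where "L = {..<K} \<times> {..<\<tau>}"
    define N where "N = UM \<Otimes>\<^sub>M NM \<sigma>"
    define P where "P = PiM L (\<lambda>_. N)"
    have PB: "bandit_space K \<tau> \<sigma> = P" unfolding bandit_space_def P_def L_def N_def ..
    have UMp: "prob_space UM" by (rule prob_space_uniform_measure) auto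
    have NMp: "prob_space (NM \<sigma>)" using \<sigma> by (rule prob_space_normal_density)
    have Np: "prob_space N" unfolding N_def using UMp NMp by (intro prob_space_pair)
    interpret P: prob_space P unfolding P_def using Np by (intro prob_space_PiM)
    have sN: "sets N = sets (borel :: (real \<times> real) measure)" unfolding N_def by (rule sets_UN)
    have cm: "(\<lambda>\<omega>. \<omega> i) \<in> borel_measurable P" for i unfolding P_def by (rule comp_meas[OF sN])
    have pm: "(\<lambda>\<omega>. policy upd \<tau> \<Delta> \<omega> k) \<in> borel_measurable P" for k
      by (rule meas_policy[where g="\<lambda>\<omega>. \<omega>", OF cm um])
    have fm: "(\<lambda>\<omega>. fst (\<omega> i)) \<in> borel_measurable P" for i
      by (rule measurable_compose[OF cm fst_borel])
    define ind where "ind = (\<lambda>k t \<omega>. if arm \<omega> (policy upd \<tau> \<Delta> \<omega> k) k t then 0 else \<Delta>)"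
    have indm: "ind k t \<in> borel_measurable P" for k t
    proof -
      note [measurable] = fm[of "(k, t)"] pm[of k]
      show ?thesis unfolding ind_def arm_def by measurable
    qed
    have indi: "integrable P (ind k t)" for k t
      by (rule P.integrable_const_bound[where B=\<Delta>]) (use \<Delta> indm in \<open>auto simp: ind_def\<close>)
    have ind0: "0 \<le> integral\<^sup>L P (ind k t)" for k t
      using \<Delta> by (intro Bochner_Integration.integral_nonneg) (auto simp: ind_def)
    have Zi: "integrable P (\<lambda>\<omega>. snd (\<omega> (k, t)))" "integral\<^sup>L P (\<lambda>\<omega>. snd (\<omega> (k, t))) = 0"
      if "k < K" "t < \<tau>" for k t
      using Z_int[OF \<sigma>, of "(k, t)" L] that unfolding P_def N_def L_def by auto
    have reg: "regret upd K \<tau> \<Delta> \<omega> = (\<Sum>k<K. \<Sum>t<\<tau>. ind k t \<omega> - snd (\<omega> (k, t)))" for \<omega>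
      unfolding regret_def ind_def reward_def by (intro sum.cong refl) auto
    have "integral\<^sup>L P (regret upd K \<tau> \<Delta>) = (\<Sum>k<K. \<Sum>t<\<tau>. integral\<^sup>L P (ind k t) - integral\<^sup>L P (\<lambda>\<omega>. snd (\<omega> (k, t))))"
    proof -
      have i1: "integrable P (\<lambda>\<omega>. ind k t \<omega> - snd (\<omega> (k, t)))" if "k < K" "t < \<tau>" for k t
        by (rule Bochner_Integration.integrable_diff) (use indi Zi that in auto)
      have "integral\<^sup>L P (\<lambda>\<omega>. \<Sum>k<K. \<Sum>t<\<tau>. ind k t \<omega> - snd (\<omega> (k, t)))
          = (\<Sum>k<K. integral\<^sup>L P (\<lambda>\<omega>. \<Sum>t<\<tau>. ind k t \<omega> - snd (\<omega> (k, t))))"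
        by (rule Bochner_Integration.integral_sum) (auto intro!: Bochner_Integration.integrable_sum i1)
      also have "\<dots> = (\<Sum>k<K. \<Sum>t<\<tau>. integral\<^sup>L P (\<lambda>\<omega>. ind k t \<omega> - snd (\<omega> (k, t))))"
        by (intro sum.cong refl Bochner_Integration.integral_sum) (auto intro: i1)
      also have "\<dots> = (\<Sum>k<K. \<Sum>t<\<tau>. integral\<^sup>L P (ind k t) - integral\<^sup>L P (\<lambda>\<omega>. snd (\<omega> (k, t))))"
        by (intro sum.cong refl Bochner_Integration.integral_diff) (use indi Zi in auto)
      finally show ?thesis unfolding reg .
    qed
    also have "\<dots> = (\<Sum>k<K. \<Sum>t<\<tau>. integral\<^sup>L P (ind k t))"
      using Zi by (intro sum.cong refl) auto
    also have "\<dots> \<ge> (\<Sum>k<K. if k = 0 then 0 else real \<tau> * (\<Delta> * (c0 * (1 - e))))"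
    proof (rule sum_mono)
      fix k assume k: "k \<in> {..<K}"
      show "(if k = 0 then 0 else real \<tau> * (\<Delta> * (c0 * (1 - e)))) \<le> (\<Sum>t<\<tau>. integral\<^sup>L P (ind k t))"
      proof (cases k)
        case 0 then show ?thesis using ind0 by (simp add: sum_nonneg)
      next
        case (Suc j)
        have "\<Delta> * (c0 * (1 - e)) \<le> integral\<^sup>L P (ind k t)" if t: "t < \<tau>" for t
        proof -
          define E where "E = {\<omega>\<in>space P. e \<le> fst (\<omega> (Suc j, t)) \<and> delta_hat \<tau> \<Delta> \<omega> (policy upd \<tau> \<Delta> \<omega> j) j < 0}"
          have Em: "E \<in> sets P"
          proof -
            have [measurable]: "(\<lambda>\<omega>. delta_hat \<tau> \<Delta> \<omega> (policy upd \<tau> \<Delta> \<omega> j) j) \<in> borel_measurable P"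
              by (rule meas_delta_hat[where g="\<lambda>\<omega>. \<omega>", OF cm pm])
            note [measurable] = fm[of "(Suc j, t)"]
            show ?thesis unfolding E_def by measurable
          qed
          have "ennreal (c0 * (1 - e)) \<le> emeasure P E"
            using event_bound[OF \<sigma> \<Delta> \<eta> um \<tau>, of j K t] Suc k t
            unfolding E_def P_def L_def N_def c0_def e_def by simp
          then have mE: "c0 * (1 - e) \<le> measure P E"
            using c0 e01 by (simp add: P.emeasure_eq_measure)
          have "ind k t \<omega> \<ge> \<Delta> * indicator E \<omega>" if w: "\<omega> \<in> space P" for \<omega>
          proof (cases "\<omega> \<in> E")
            case True
            let ?p = "policy upd \<tau> \<Delta> \<omega> j"
            have pr: "0 < ?p" "?p < 1" using pol_range[OF tr] by auto
            have "policy upd \<tau> \<Delta> \<omega> k = upd ?p (delta_hat \<tau> \<Delta> \<omega> ?p j)" using Suc by simp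
            also have "\<dots> \<le> e" unfolding e_def
              using upd_small[OF tr \<eta> pr] True unfolding E_def by auto
            finally have "\<not> arm \<omega> (policy upd \<tau> \<Delta> \<omega> k) k t"
              using True unfolding E_def arm_def Suc by auto
            then show ?thesis unfolding ind_def using True by simp
          next
            case False then show ?thesis unfolding ind_def using \<Delta> by simp
          qed
          then have "integral\<^sup>L P (\<lambda>\<omega>. \<Delta> * indicator E \<omega>) \<le> integral\<^sup>L P (ind k t)"
          proof (intro integral_mono)
            show "integrable P (\<lambda>\<omega>. \<Delta> * indicator E \<omega>)"
              using Em by (intro integrable_mult_right integrable_real_indicator) (auto simp: P.emeasure_finite less_top[symmetric])
          qed (use indi in auto)
          moreover have "integral\<^sup>L P (\<lambda>\<omega>. \<Delta> * indicator E \<omega>) = \<Delta> * measure P E"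
            using Em by (simp add: Int_absorb2 sets.sets_into_space)
          ultimately show ?thesis using mE \<Delta> by (smt (verit) mult_left_mono)
        qed
        then have "(\<Sum>t<\<tau>. \<Delta> * (c0 * (1 - e))) \<le> (\<Sum>t<\<tau>. integral\<^sup>L P (ind k t))"
          by (intro sum_mono) auto
        then show ?thesis using Suc by simp
      qed
    qed
    finally have main: "(real K - 1) * (real \<tau> * (\<Delta> * (c0 * (1 - e)))) \<le> integral\<^sup>L P (regret upd K \<tau> \<Delta>)"
      using sum_if0[OF K] by simp
    have "\<Delta> / 2 * c0 * (1 - e) * (real K * real \<tau> - real \<tau>) \<le> (real K - 1) * (real \<tau> * (\<Delta> * (c0 * (1 - e))))"
    proof -
      have nn: "0 \<le> c0 * (1 - e) * ((real K - 1) * real \<tau>)" using c0 e01 K by simp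
      have "\<Delta> / 2 * c0 * (1 - e) * (real K * real \<tau> - real \<tau>) = (\<Delta> / 2) * (c0 * (1 - e) * ((real K - 1) * real \<tau>))"
        by (simp add: field_simps)
      also have "\<dots> \<le> \<Delta> * (c0 * (1 - e) * ((real K - 1) * real \<tau>))"
        using nn \<Delta> by (intro mult_right_mono) auto
      also have "\<dots> = (real K - 1) * (real \<tau> * (\<Delta> * (c0 * (1 - e))))" by (simp add: algebra_simps)
      finally show ?thesis .
    qed
    then show ?thesis using main unfolding PB c0_def[symmetric] e_def[symmetric] by simp
  qed
qed

end
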